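(* Let $\gamma>0$ and $R\ge600(\gamma^{3/4}+\gamma^{-3/4})$. For every $j\in\mathbb{N}$, the equation $w=G_{j,R}(w)$ has a unique solution in $F_\infty$, and this solution lies in $F_j$. The solutions for different $j$ are different.
   Context: $\arg_-(\zeta)\in[-\pi,\pi)$, $\mathrm{sq}_-(\zeta)=\sqrt{|\zeta|}e^{\frac i2\arg_-(\zeta)}$. For $j\in\mathbb{N}$: $A(w)=\log\left|\frac{\mathrm{sq}_-(w^2+i\gamma)-w}{\mathrm{sq}_-(w^2+i\gamma)+w}\right|$, $B_j(w)=\arg_-\!\left(\frac{\mathrm{sq}_-(w^2+i\gamma)-w}{\mathrm{sq}_-(w^2+i\gamma)+w}\right)+2\pi j$, $G_{j,R}(w)=\frac{-B_j(w)+iA(w)}{2R}$. The sets are $F_\infty=\{w\in\mathbb{C}:\operatorname{Re}w\le0\le\operatorname{Im}w,\ |\operatorname{Re}w|\ge2\operatorname{Im}w\}$ and $F_j=\{w\in F_\infty: B_j(w)\ge2|A(w)|\}$. *)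

theory Defs
  imports "HOL-Analysis.Analysis"
begin

text \<open>Branch of the argument with values in [-pi, pi) (Isabelle's Arg takes values in (-pi, pi]).\<close>
definition arg_minus :: "complex \<Rightarrow> real" where
  "arg_minus z = (if Arg z = pi then - pi else Arg z)"

definition sq_minus :: "complex \<Rightarrow> complex" where
  "sq_minus z = complex_of_real (sqrt (cmod z)) * exp (\<i> * complex_of_real (arg_minus z / 2))"

definition quotQ :: "real \<Rightarrow> complex \<Rightarrow> complex" where
  "quotQ \<gamma> w = (sq_minus (w\<^sup>2 + \<i> * complex_of_real \<gamma>) - w) /
                (sq_minus (w\<^sup>2 + \<i> * complex_of_real \<gamma>) + w)"

definition A_fun :: "real \<Rightarrow> complex \<Rightarrow> real" where
  "A_fun \<gamma> w = ln (cmod (quotQ \<gamma> w))"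

definition B_fun :: "real \<Rightarrow> nat \<Rightarrow> complex \<Rightarrow> real" where
  "B_fun \<gamma> j w = arg_minus (quotQ \<gamma> w) + 2 * pi * real j"

definition G_fun :: "real \<Rightarrow> nat \<Rightarrow> real \<Rightarrow> complex \<Rightarrow> complex" where
  "G_fun \<gamma> j R w = (- complex_of_real (B_fun \<gamma> j w) + \<i> * complex_of_real (A_fun \<gamma> w))
                     / complex_of_real (2 * R)"

definition F_inf :: "complex set" where
  "F_inf = {w. Re w \<le> 0 \<and> 0 \<le> Im w \<and> \<bar>Re w\<bar> \<ge> 2 * Im w}"

definition F_j :: "real \<Rightarrow> nat \<Rightarrow> complex set" where
  "F_j \<gamma> j = {w \<in> F_inf. B_fun \<gamma> j w \<ge> 2 * \<bar>A_fun \<gamma> w\<bar>}"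

end

theory Submission
  imports Defs
begin

definition cs :: "real \<Rightarrow> complex \<Rightarrow> complex" where
  "cs \<gamma> w = csqrt (w\<^sup>2 + \<i> * complex_of_real \<gamma>)"
definition Qc :: "real \<Rightarrow> complex \<Rightarrow> complex" where
  "Qc \<gamma> w = (cs \<gamma> w - w) / (cs \<gamma> w + w)"
definition Lc :: "real \<Rightarrow> complex \<Rightarrow> complex" where
  "Lc \<gamma> w = Ln (Qc \<gamma> w)"

lemma F_infD:
  assumes "w \<in> F_inf"
  shows "Re w \<le> 0" "Im w \<ge> 0" "(Re w)\<^sup>2 \<ge> 4 * (Im w)\<^sup>2"
proof -
  show "Re w \<le> 0" "Im w \<ge> 0" using assms by (auto simp: F_inf_def)
  have "\<bar>Re w\<bar> \<ge> 2 * Im w" "Im w \<ge> 0" using assms by (auto simp: F_inf_def)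
  then have "\<bar>Re w\<bar>\<^sup>2 \<ge> (2 * Im w)\<^sup>2" by (intro power_mono) auto
  then show "(Re w)\<^sup>2 \<ge> 4 * (Im w)\<^sup>2" by (simp add: power_mult_distrib)
qed

lemma z_notin:
  assumes "\<gamma> > 0" "w \<in> F_inf"
  shows "w\<^sup>2 + \<i> * complex_of_real \<gamma> \<notin> \<real>\<^sub>\<le>\<^sub>0"
proof
  let ?x = "Re w" and ?y = "Im w"
  assume "w\<^sup>2 + \<i> * complex_of_real \<gamma> \<in> \<real>\<^sub>\<le>\<^sub>0"
  then have h: "?x^2 - ?y^2 \<le> 0" "2 * ?x * ?y + \<gamma> = 0"
    by (auto simp: complex_nonpos_Reals_iff power2_eq_square algebra_simps)
  have f: "?x\<^sup>2 \<ge> 4 * ?y\<^sup>2" using F_infD[OF assms(2)] by auto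
  have "?y \<noteq> 0" using h(2) assms(1) by auto
  then have "?y^2 > 0" by simp
  then show False using h f by linarith
qed

lemma cs_sq: "(cs \<gamma> w)\<^sup>2 = w\<^sup>2 + \<i> * complex_of_real \<gamma>"
  by (simp add: cs_def)

lemma cs_plus_nz:
  assumes "\<gamma> > 0" shows "cs \<gamma> w + w \<noteq> 0"
proof
  assume "cs \<gamma> w + w = 0"
  then have "cs \<gamma> w = - w" by (metis add_implies_diff diff_0)
  then have "(cs \<gamma> w)\<^sup>2 = w\<^sup>2" by simp
  then show False using cs_sq[of \<gamma> w] assms by (auto simp: complex_eq_iff)
qed

lemma cs_minus_nz:
  assumes "\<gamma> > 0" shows "cs \<gamma> w - w \<noteq> 0"
proof
  assume "cs \<gamma> w - w = 0"
  then have "cs \<gamma> w = w" by simp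
  then have "(cs \<gamma> w)\<^sup>2 = w\<^sup>2" by simp
  then show False using cs_sq[of \<gamma> w] assms by (auto simp: complex_eq_iff)
qed

lemma cs_comp:
  "(Re (cs \<gamma> w))\<^sup>2 - (Im (cs \<gamma> w))\<^sup>2 = (Re w)\<^sup>2 - (Im w)\<^sup>2"
  "2 * Re (cs \<gamma> w) * Im (cs \<gamma> w) = 2 * Re w * Im w + \<gamma>"
  using arg_cong[OF cs_sq[of \<gamma> w], of Re] arg_cong[OF cs_sq[of \<gamma> w], of Im]
  by (auto simp: power2_eq_square algebra_simps)

lemma real_key:
  fixes a b x y :: real
  assumes "a \<ge> 0" "x \<le> 0" "y \<ge> 0" "x\<^sup>2 \<ge> 4 * y\<^sup>2" "a\<^sup>2 - b\<^sup>2 = x\<^sup>2 - y\<^sup>2"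
  shows "a * x + b * y \<le> 0"
proof (rule ccontr)
  assume "\<not> ?thesis"
  then have c: "b * y > - (a * x)" by simp
  have ax: "- (a * x) \<ge> 0" using assms by (simp add: mult_nonneg_nonpos)
  have "(b*y)^2 > (-(a*x))^2" using c ax by (intro power_strict_mono) auto
  then have "b\<^sup>2 * y\<^sup>2 > a\<^sup>2 * x\<^sup>2" by (simp add: power_mult_distrib)
  also have "a\<^sup>2 = b\<^sup>2 + x\<^sup>2 - y\<^sup>2" using assms(5) by simp
  hence "a\<^sup>2 * x\<^sup>2 = (b\<^sup>2 + x\<^sup>2 - y\<^sup>2) * x\<^sup>2" by simp
  finally have "0 < (y\<^sup>2 - x\<^sup>2) * (b\<^sup>2 + x\<^sup>2)" by (simp add: algebra_simps)
  moreover have "y\<^sup>2 - x\<^sup>2 \<le> 0" using assms(4) by (smt (verit) zero_le_power2)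
  moreover have "b\<^sup>2 + x\<^sup>2 \<ge> 0" by simp
  ultimately show False by (simp add: mult_nonpos_nonneg leD)
qed

lemma Q_norm:
  assumes "\<gamma> > 0" "w \<in> F_inf"
  shows "norm (Qc \<gamma> w) \<ge> 1"
proof -
  let ?s = "cs \<gamma> w"
  have "Re ?s \<ge> 0" unfolding cs_def by (rule Re_csqrt)
  then have k: "Re ?s * Re w + Im ?s * Im w \<le> 0"
    using real_key[of "Re ?s" "Re w" "Im w" "Im ?s"] F_infD[OF assms(2)] cs_comp(1)[of \<gamma> w]
    by auto
  have e1: "(norm (?s + w))\<^sup>2 = (Re ?s)\<^sup>2 + (Re w)\<^sup>2 + 2 * (Re ?s * Re w) + ((Im ?s)\<^sup>2 + (Im w)\<^sup>2 + 2 * (Im ?s * Im w))"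
    by (simp add: cmod_power2 power2_sum)
  have e2: "(norm (?s - w))\<^sup>2 = (Re ?s)\<^sup>2 + (Re w)\<^sup>2 - 2 * (Re ?s * Re w) + ((Im ?s)\<^sup>2 + (Im w)\<^sup>2 - 2 * (Im ?s * Im w))"
    by (simp add: cmod_power2 power2_diff)
  have "(norm (?s + w))\<^sup>2 \<le> (norm (?s - w))\<^sup>2"
    unfolding e1 e2 using k by linarith
  then have "norm (?s + w) \<le> norm (?s - w)"
    by (simp add: power2_le_iff_abs_le)
  then show ?thesis using cs_plus_nz[OF assms(1), of w]
    by (simp add: Qc_def norm_divide)
qed

lemma Q_notin:
  assumes "\<gamma> > 0" "w \<in> F_inf"
  shows "Qc \<gamma> w \<notin> \<real>\<^sub>\<le>\<^sub>0"
proof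
  let ?s = "cs \<gamma> w"
  assume "Qc \<gamma> w \<in> \<real>\<^sub>\<le>\<^sub>0"
  then have "Re (Qc \<gamma> w) \<le> 0" "Im (Qc \<gamma> w) = 0" by (auto simp: complex_nonpos_Reals_iff)
  then obtain t where t: "t \<ge> 0" "Qc \<gamma> w = - complex_of_real t"
    by (intro that[of "- Re (Qc \<gamma> w)"]) (auto simp: complex_eq_iff)
  have nz: "?s + w \<noteq> 0" using cs_plus_nz[OF assms(1)] .
  have "?s - w = - complex_of_real t * (?s + w)" using t(2) nz by (simp add: Qc_def field_simps)
  then have e: "Re ?s * (1 + t) = Re w * (1 - t)" "Im ?s * (1 + t) = Im w * (1 - t)"
    by (auto simp: complex_eq_iff algebra_simps)
  define c where "c = (1 - t) / (1 + t)"
  have a: "Re ?s = c * Re w" "Im ?s = c * Im w" using e t(1) by (auto simp: c_def field_simps)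
  have h1: "(c\<^sup>2 - 1) * ((Re w)\<^sup>2 - (Im w)\<^sup>2) = 0" using cs_comp(1)[of \<gamma> w] a
    by (simp add: power_mult_distrib algebra_simps)
  have h2: "2 * Re w * Im w * (c\<^sup>2 - 1) = \<gamma>" using cs_comp(2)[of \<gamma> w] a
    by (simp add: power2_eq_square algebra_simps)
  have "c\<^sup>2 - 1 \<noteq> 0" using h2 assms(1) by auto
  then have "(Re w)\<^sup>2 = (Im w)\<^sup>2" using h1 by simp
  then have "(Im w)\<^sup>2 \<le> 0" using F_infD[OF assms(2)] by linarith
  then have "Im w = 0" by simp
  then show False using h2 assms(1) by simp
qed

lemma sq_minus_eq:
  assumes "z \<notin> \<real>\<^sub>\<le>\<^sub>0"
  shows "sq_minus z = csqrt z"
proof -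
  have z: "z \<noteq> 0" using assms by auto
  have A: "Arg z \<noteq> pi" using assms by (auto simp: Arg_eq_pi complex_nonpos_Reals_iff)
  have am: "arg_minus z = Arg z" using A by (simp add: arg_minus_def)
  have L: "Ln z = complex_of_real (ln (cmod z)) + \<i> * complex_of_real (Arg z)"
    using z by (auto simp: complex_eq_iff Arg_def)
  have "csqrt z = exp (Ln z / 2)" using csqrt_exp_Ln[OF z] .
  also have "Ln z / 2 = complex_of_real (ln (cmod z) / 2) + \<i> * complex_of_real (Arg z / 2)"
    unfolding L by (simp add: field_simps)
  also have "exp \<dots> = exp (complex_of_real (ln (cmod z) / 2)) * exp (\<i> * complex_of_real (Arg z / 2))"
    by (rule exp_add)
  also have "exp (complex_of_real (ln (cmod z) / 2)) = complex_of_real (exp (ln (cmod z) / 2))"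
    by (rule exp_of_real)
  also have "exp (ln (cmod z) / 2) = sqrt (cmod z)"
    using z by (simp add: powr_half_sqrt[symmetric] powr_def)
  finally have "csqrt z = complex_of_real (sqrt (cmod z)) * exp (\<i> * complex_of_real (Arg z / 2))" .
  then show ?thesis by (simp add: sq_minus_def am)
qed

lemma quotQ_eq:
  assumes "\<gamma> > 0" "w \<in> F_inf"
  shows "quotQ \<gamma> w = Qc \<gamma> w"
  using sq_minus_eq[OF z_notin[OF assms]] by (simp add: quotQ_def Qc_def cs_def)

lemma Qc_nz: assumes "\<gamma> > 0" shows "Qc \<gamma> w \<noteq> 0"
  using cs_plus_nz[OF assms] cs_minus_nz[OF assms] by (simp add: Qc_def)

lemma G_eq:
  assumes "\<gamma> > 0" "w \<in> F_inf"
  shows "G_fun \<gamma> j R w = (\<i> * Lc \<gamma> w - complex_of_real (2 * pi * real j)) / complex_of_real (2 * R)"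
proof -
  have Q: "quotQ \<gamma> w = Qc \<gamma> w" by (rule quotQ_eq[OF assms])
  have nz: "Qc \<gamma> w \<noteq> 0" by (rule Qc_nz[OF assms(1)])
  have ni: "Qc \<gamma> w \<notin> \<real>\<^sub>\<le>\<^sub>0" by (rule Q_notin[OF assms])
  have A: "Arg (Qc \<gamma> w) \<noteq> pi" using ni by (auto simp: Arg_eq_pi complex_nonpos_Reals_iff)
  have a: "A_fun \<gamma> w = Re (Lc \<gamma> w)" using nz by (simp add: A_fun_def Q Lc_def)
  have b: "B_fun \<gamma> j w = Im (Lc \<gamma> w) + 2 * pi * real j"
    using nz A by (simp add: B_fun_def Q Lc_def arg_minus_def Arg_def)
  have "- complex_of_real (B_fun \<gamma> j w) + \<i> * complex_of_real (A_fun \<gamma> w)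
        = \<i> * Lc \<gamma> w - complex_of_real (2 * pi * real j)"
    unfolding a b by (simp add: complex_eq_iff)
  then show ?thesis by (simp add: G_fun_def)
qed

lemma Lc_deriv:
  assumes "\<gamma> > 0" "w \<in> F_inf"
  shows "(Lc \<gamma> has_field_derivative (- 2 / cs \<gamma> w)) (at w)"
proof -
  let ?s = "cs \<gamma> w"
  have d1: "((\<lambda>w. w\<^sup>2 + \<i> * complex_of_real \<gamma>) has_field_derivative 2 * w) (at w)"
    by (auto intro!: derivative_eq_intros)
  have ds: "(cs \<gamma> has_field_derivative (2 * w) / (2 * ?s)) (at w)"
    using has_field_derivative_csqrt'[OF d1 z_notin[OF assms]] unfolding cs_def[abs_def] by simp
  have sp: "?s + w \<noteq> 0" by (rule cs_plus_nz[OF assms(1)])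
  have sm: "?s - w \<noteq> 0" by (rule cs_minus_nz[OF assms(1)])
  have s0: "?s \<noteq> 0"
  proof
    assume "?s = 0"
    then have "w\<^sup>2 + \<i> * complex_of_real \<gamma> = 0" using cs_sq[of \<gamma> w] by simp
    then show False using z_notin[OF assms] by (simp add: complex_nonpos_Reals_iff)
  qed
  define s' where "s' = (2 * w) / (2 * ?s)"
  have dp: "((\<lambda>w. cs \<gamma> w + w) has_field_derivative s' + 1) (at w)"
    using ds unfolding s'_def by (auto intro!: derivative_eq_intros)
  have dm: "((\<lambda>w. cs \<gamma> w - w) has_field_derivative s' - 1) (at w)"
    using ds unfolding s'_def by (auto intro!: derivative_eq_intros)
  have dQ: "(Qc \<gamma> has_field_derivative
      ((s' - 1) * (?s + w) - (?s - w) * (s' + 1)) / ((?s + w) * (?s + w))) (at w)"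
    unfolding Qc_def[abs_def] by (rule DERIV_divide[OF dm dp sp])
  have dL: "(Lc \<gamma> has_field_derivative inverse (Qc \<gamma> w) *
      (((s' - 1) * (?s + w) - (?s - w) * (s' + 1)) / ((?s + w) * (?s + w)))) (at w)"
    unfolding Lc_def[abs_def] by (rule DERIV_chain2[OF has_field_derivative_Ln[OF Q_notin[OF assms]] dQ])
  have sq: "?s * ?s = w * w + \<i> * complex_of_real \<gamma>" using cs_sq[of \<gamma> w] by (simp add: power2_eq_square)
  have g0: "complex_of_real \<gamma> \<noteq> 0" using assms(1) by simp
  define N where "N = (s' - 1) * (?s + w) - (?s - w) * (s' + 1)"
  have N1: "N = 2 * (w * w - ?s * ?s) / ?s"
  proof -
    have "N = 2 * s' * w - 2 * ?s" by (simp add: N_def algebra_simps)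
    also have "\<dots> = 2 * (w * w - ?s * ?s) / ?s" using s0 by (simp add: s'_def field_simps)
    finally show ?thesis .
  qed
  have N2: "inverse (Qc \<gamma> w) * (N / ((?s + w) * (?s + w))) = N / ((?s - w) * (?s + w))"
  proof -
    have "inverse (Qc \<gamma> w) * (N / ((?s + w) * (?s + w))) = ((?s + w) * N) / ((?s + w) * ((?s - w) * (?s + w)))"
      by (simp add: Qc_def ac_simps)
    also have "\<dots> = N / ((?s - w) * (?s + w))" using sp by (rule mult_divide_mult_cancel_left)
    finally show ?thesis .
  qed
  have e3: "w * w - ?s * ?s = - (\<i> * complex_of_real \<gamma>)" using sq by simp
  have e4: "(?s - w) * (?s + w) = \<i> * complex_of_real \<gamma>" using sq by (simp add: algebra_simps)
  have "inverse (Qc \<gamma> w) * (N / ((?s + w) * (?s + w))) = N / ((?s - w) * (?s + w))" by (rule N2)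
  also have "\<dots> = (2 * (- (\<i> * complex_of_real \<gamma>)) / ?s) / (\<i> * complex_of_real \<gamma>)"
    by (simp only: N1 e3 e4)
  also have "\<dots> = - 2 / ?s" using g0 s0 by (simp add: field_simps)
  finally have "inverse (Qc \<gamma> w) * (N / ((?s + w) * (?s + w))) = - 2 / ?s" .
  then have "inverse (Qc \<gamma> w) * (((s' - 1) * (?s + w) - (?s - w) * (s' + 1)) / ((?s + w) * (?s + w))) = - 2 / ?s"
    by (simp add: N_def)
  then show ?thesis using dL by simp
qed

lemma z_lower:
  assumes "\<gamma> > 0" "w \<in> F_inf"
  shows "norm (w\<^sup>2 + \<i> * complex_of_real \<gamma>) \<ge> \<gamma> / 4"
proof -
  let ?x = "Re w" and ?y = "Im w" and ?z = "w\<^sup>2 + \<i> * complex_of_real \<gamma>"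
  have re: "Re ?z = ?x * ?x - ?y * ?y" and im: "Im ?z = 2 * (?x * ?y) + \<gamma>"
    by (simp_all add: power2_eq_square)
  have x0: "?x \<le> 0" "?y \<ge> 0" "- ?x \<ge> 2 * ?y" using assms(2) by (auto simp: F_inf_def)
  have p1: "(-?x) * (-?x) \<ge> (-?x) * (2 * ?y)" using x0 by (intro mult_left_mono) auto
  have p2: "?y * (-?x) \<ge> ?y * (2 * ?y)" using x0 by (intro mult_left_mono) auto
  show ?thesis
  proof (cases "Im ?z \<ge> \<gamma> / 4")
    case True
    then show ?thesis using abs_Im_le_cmod[of ?z] by linarith
  next
    case False
    then have "Re ?z \<ge> \<gamma> / 4" unfolding re im using p1 p2 assms(1) by (simp add: algebra_simps)
    then show ?thesis using abs_Re_le_cmod[of ?z] by linarith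
  qed
qed

lemma cs_lower:
  assumes "\<gamma> > 0" "w \<in> F_inf"
  shows "norm (cs \<gamma> w) \<ge> sqrt \<gamma> / 2"
proof -
  have "sqrt (\<gamma> / 4) \<le> sqrt (norm (w\<^sup>2 + \<i> * complex_of_real \<gamma>))"
    using z_lower[OF assms] by simp
  moreover have "sqrt (\<gamma> / 4) = sqrt \<gamma> / 2" by (simp add: real_sqrt_divide)
  ultimately show ?thesis by (simp add: cs_def)
qed

lemma convex_F_inf: "convex F_inf"
  unfolding convex_def
proof (intro ballI allI impI)
  fix x y :: complex and u v :: real
  assume xy: "x \<in> F_inf" "y \<in> F_inf" and uv: "0 \<le> u" "0 \<le> v" "u + v = 1"
  have x0: "Re x \<le> 0" "Im x \<ge> 0" "- Re x \<ge> 2 * Im x" using xy(1) by (auto simp: F_inf_def)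
  have y0: "Re y \<le> 0" "Im y \<ge> 0" "- Re y \<ge> 2 * Im y" using xy(2) by (auto simp: F_inf_def)
  have a1: "u * Re x \<le> 0" "v * Re y \<le> 0" using x0 y0 uv by (auto intro: mult_nonneg_nonpos)
  have a2: "u * Im x \<ge> 0" "v * Im y \<ge> 0" using x0 y0 uv by auto
  have a3: "u * (- Re x) \<ge> u * (2 * Im x)" "v * (- Re y) \<ge> v * (2 * Im y)"
    using x0 y0 uv by (intro mult_left_mono; simp)+
  show "u *\<^sub>R x + v *\<^sub>R y \<in> F_inf"
    using a1 a2 a3 by (simp add: F_inf_def algebra_simps)
qed

lemma closed_F_inf: "closed F_inf"
  unfolding F_inf_def
  by (intro closed_Collect_conj closed_Collect_le continuous_intros)

lemma Lc_lip:
  assumes "\<gamma> > 0" "x \<in> F_inf" "y \<in> F_inf"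
  shows "norm (Lc \<gamma> x - Lc \<gamma> y) \<le> 4 / sqrt \<gamma> * norm (x - y)"
proof (rule field_differentiable_bound[OF convex_F_inf])
  fix z assume z: "z \<in> F_inf"
  show "(Lc \<gamma> has_field_derivative - 2 / cs \<gamma> z) (at z within F_inf)"
    using Lc_deriv[OF assms(1) z] by (rule has_field_derivative_at_within)
  have l: "norm (cs \<gamma> z) \<ge> sqrt \<gamma> / 2" by (rule cs_lower[OF assms(1) z])
  have p: "sqrt \<gamma> > 0" using assms(1) by simp
  have n0: "norm (cs \<gamma> z) > 0" using l p by linarith
  have "norm (- 2 / cs \<gamma> z) = 2 / norm (cs \<gamma> z)" by (simp add: norm_divide)
  also have "\<dots> \<le> 2 / (sqrt \<gamma> / 2)" using l p n0 by (intro divide_left_mono) auto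
  also have "\<dots> = 4 / sqrt \<gamma>" by simp
  finally show "norm (- 2 / cs \<gamma> z) \<le> 4 / sqrt \<gamma>" .
qed (use assms in auto)

lemma Lc_0: assumes "\<gamma> > 0" shows "Lc \<gamma> 0 = 0"
proof -
  have "cs \<gamma> 0 \<noteq> 0" using cs_plus_nz[OF assms, of 0] by simp
  then show ?thesis by (simp add: Lc_def Qc_def)
qed

lemma zero_F_inf: "0 \<in> F_inf" by (simp add: F_inf_def)

lemma R_bound:
  fixes \<gamma> R :: real
  assumes g: "\<gamma> > 0" and R: "R \<ge> 600 * (\<gamma> powr (3/4) + \<gamma> powr (-3/4))"
  shows "R * sqrt \<gamma> \<ge> 600"
proof -
  have sq: "sqrt \<gamma> = \<gamma> powr (1/2)" using g by (simp add: powr_half_sqrt)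
  have sp: "sqrt \<gamma> > 0" using g by simp
  have "R * sqrt \<gamma> \<ge> 600 * (\<gamma> powr (3/4) + \<gamma> powr (-3/4)) * sqrt \<gamma>"
    using R sp by (intro mult_right_mono) auto
  also have "600 * (\<gamma> powr (3/4) + \<gamma> powr (-3/4)) * sqrt \<gamma> = 600 * (\<gamma> powr (5/4) + \<gamma> powr (-1/4))"
  proof -
    have a: "\<gamma> powr (3/4) * \<gamma> powr (1/2) = \<gamma> powr (5/4)" using powr_add[of \<gamma> "3/4" "1/2"] by simp
    have b: "\<gamma> powr (-3/4) * \<gamma> powr (1/2) = \<gamma> powr (-1/4)" using powr_add[of \<gamma> "-3/4" "1/2"] by simp
    show ?thesis unfolding sq using a b by (simp add: algebra_simps)
  qed
  finally have *: "R * sqrt \<gamma> \<ge> 600 * (\<gamma> powr (5/4) + \<gamma> powr (-1/4))" .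
  have "\<gamma> powr (5/4) + \<gamma> powr (-1/4) \<ge> 1"
  proof (cases "\<gamma> \<ge> 1")
    case True
    then have "\<gamma> powr (5/4) \<ge> 1" by (intro ge_one_powr_ge_zero) auto
    moreover have "\<gamma> powr (-1/4) \<ge> 0" by simp
    ultimately show ?thesis by linarith
  next
    case False
    have a: "\<gamma> powr (1/4) \<le> 1 powr (1/4)" using False g by (intro powr_mono2) auto
    have b: "\<gamma> powr (1/4) > 0" using g by simp
    have "\<gamma> powr (-1/4) = inverse (\<gamma> powr (1/4))"
      using powr_minus[of \<gamma> "1/4"] by simp
    also have "\<dots> \<ge> 1" using a b by (simp add: one_le_inverse_iff)
    finally have "\<gamma> powr (-1/4) \<ge> 1" .
    moreover have "\<gamma> powr (5/4) \<ge> 0" by simp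
    ultimately show ?thesis by linarith
  qed
  then have "600 \<le> 600 * (\<gamma> powr (5/4) + \<gamma> powr (-1/4))" by simp
  with * show ?thesis by linarith
qed

theorem proposition2p3:
  fixes \<gamma> R :: real
  assumes "\<gamma> > 0"
    and "R \<ge> 600 * (\<gamma> powr (3/4) + \<gamma> powr (-3/4))"
  shows "(\<forall>j::nat. j \<ge> 1 \<longrightarrow>
           (\<exists>!w. w \<in> F_inf \<and> w = G_fun \<gamma> j R w) \<and>
           (\<forall>w. w \<in> F_inf \<and> w = G_fun \<gamma> j R w \<longrightarrow> w \<in> F_j \<gamma> j)) \<and>
         (\<forall>(j::nat) (k::nat) w v. j \<ge> 1 \<longrightarrow> k \<ge> 1 \<longrightarrow> j \<noteq> k \<longrightarrow>
           w \<in> F_inf \<longrightarrow> w = G_fun \<gamma> j R w \<longrightarrow>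
           v \<in> F_inf \<longrightarrow> v = G_fun \<gamma> k R v \<longrightarrow> w \<noteq> v)"
proof -
  have g: "\<gamma> > 0" by (rule assms(1))
  have K: "R * sqrt \<gamma> \<ge> 600" by (rule R_bound[OF assms])
  have sg: "sqrt \<gamma> > 0" using g by simp
  have Rp: "R > 0"
  proof (rule ccontr)
    assume "\<not> R > 0"
    then have "R * sqrt \<gamma> \<le> 0" using sg by (simp add: mult_nonpos_nonneg)
    then show False using K by linarith
  qed
  have fixG: "Re w = - B_fun \<gamma> j w / (2 * R) \<and> Im w = A_fun \<gamma> w / (2 * R)"
    if "w = G_fun \<gamma> j R w" for w j
  proof -
    have "Re w = Re (G_fun \<gamma> j R w)" "Im w = Im (G_fun \<gamma> j R w)" using that by simp_all
    then show ?thesis by (simp add: G_fun_def Re_divide_of_real Im_divide_of_real)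
  qed
  have part2: "w \<in> F_j \<gamma> j" if "w \<in> F_inf" "w = G_fun \<gamma> j R w" for w j
  proof -
    have e: "B_fun \<gamma> j w = - 2 * R * Re w" "A_fun \<gamma> w = 2 * R * Im w"
      using fixG[OF that(2)] Rp by (auto simp: field_simps)
    have f: "Re w \<le> 0" "Im w \<ge> 0" "- Re w \<ge> 2 * Im w" using that(1) by (auto simp: F_inf_def)
    have "R * (- Re w) \<ge> R * (2 * Im w)" using f Rp by (intro mult_left_mono) auto
    moreover have "R * Im w \<ge> 0" using f Rp by simp
    ultimately have "B_fun \<gamma> j w \<ge> 2 * \<bar>A_fun \<gamma> w\<bar>" unfolding e by (simp add: algebra_simps)
    then show ?thesis using that(1) by (simp add: F_j_def)
  qed
  have part3: "w \<noteq> v" if "j \<noteq> k" "w = G_fun \<gamma> j R w" "v = G_fun \<gamma> k R v" for j k w v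
  proof
    assume "w = v"
    then have "B_fun \<gamma> j w = B_fun \<gamma> k w" using fixG[OF that(2)] fixG[OF that(3)] Rp by auto
    then have "real j = real k" by (simp add: B_fun_def)
    then show False using that(1) by simp
  qed
  have part1: "\<exists>!w. w \<in> F_inf \<and> w = G_fun \<gamma> j R w" if j: "j \<ge> 1" for j
  proof -
    define g where "g w = (\<i> * Lc \<gamma> w - complex_of_real (2 * pi * real j)) / complex_of_real (2 * R)" for w
    define c where "c = 2 / (R * sqrt \<gamma>)"
    have c: "0 \<le> c" "c < 1" using K by (auto simp: c_def)
    have Geq: "G_fun \<gamma> j R w = g w" if "w \<in> F_inf" for w
      unfolding g_def by (rule G_eq[OF g that])
    have lip: "norm (g x - g y) \<le> c * norm (x - y)" if "x \<in> F_inf" "y \<in> F_inf" for x y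
    proof -
      have "g x - g y = \<i> * (Lc \<gamma> x - Lc \<gamma> y) / complex_of_real (2 * R)"
        by (simp add: g_def diff_divide_distrib algebra_simps)
      then have "norm (g x - g y) = norm (Lc \<gamma> x - Lc \<gamma> y) / (2 * R)"
        using Rp by (simp add: norm_divide norm_mult)
      also have "\<dots> \<le> (4 / sqrt \<gamma> * norm (x - y)) / (2 * R)"
        using Lc_lip[OF g that] Rp by (intro divide_right_mono) auto
      also have "\<dots> = c * norm (x - y)" using Rp sg by (simp add: c_def field_simps)
      finally show ?thesis .
    qed
    define \<rho> where "\<rho> = 2 * pi * real j / R"
    define S where "S = F_inf \<inter> cball 0 \<rho>"
    have S0: "0 \<in> S" using Rp by (simp add: S_def \<rho>_def zero_F_inf)
    have Scomp: "complete S" unfolding S_def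
      by (intro complete_eq_closed[THEN iffD2] closed_Int closed_F_inf closed_cball)
    have gS: "g ` S \<subseteq> S"
    proof
      fix y assume "y \<in> g ` S"
      then obtain w where w: "w \<in> S" "y = g w" by auto
      have wF: "w \<in> F_inf" and wn: "norm w \<le> \<rho>" using w(1) by (auto simp: S_def)
      let ?L = "Lc \<gamma> w"
      have Ln: "norm ?L \<le> 4 / sqrt \<gamma> * \<rho>"
      proof -
        have "norm (?L - Lc \<gamma> 0) \<le> 4 / sqrt \<gamma> * norm (w - 0)"
          by (rule Lc_lip[OF g wF zero_F_inf])
        also have "\<dots> \<le> 4 / sqrt \<gamma> * \<rho>" using wn sg by (intro mult_left_mono) auto
        finally show ?thesis by (simp add: Lc_0[OF g])
      qed
      have Lb: "4 / sqrt \<gamma> * \<rho> \<le> 8 * pi * real j / 600"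
      proof -
        have "4 / sqrt \<gamma> * \<rho> = 8 * pi * real j / (R * sqrt \<gamma>)" by (simp add: \<rho>_def field_simps)
        also have "\<dots> \<le> 8 * pi * real j / 600" using K by (intro divide_left_mono) auto
        finally show ?thesis .
      qed
      have Qnz: "Qc \<gamma> w \<noteq> 0" by (rule Qc_nz[OF g])
      have reL: "Re ?L \<ge> 0" using Q_norm[OF g wF] Qnz by (simp add: Lc_def)
      have imL: "Im ?L > - pi" using Qnz by (simp add: Lc_def mpi_less_Im_Ln)
      have reLb: "Re ?L \<le> norm ?L" by (rule complex_Re_le_cmod)
      have gre: "Re (g w) = - (Im ?L + 2 * pi * real j) / (2 * R)"
        and gim: "Im (g w) = Re ?L / (2 * R)"
        by (simp_all add: g_def Re_divide_of_real Im_divide_of_real)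
      have jj: "real j \<ge> 1" using j by simp
      have c1: "Im ?L + 2 * pi * real j \<ge> 2 * Re ?L"
      proof -
        have "pi * real j \<ge> pi" using jj by simp
        moreover have "8 * pi * real j / 600 \<le> pi * real j / 2" by simp
        ultimately show ?thesis using imL Ln Lb reLb by linarith
      qed
      have inF: "g w \<in> F_inf"
      proof -
        have "pi * real j \<ge> pi" using jj by simp
        then have "Im ?L + 2 * pi * real j \<ge> 0" using imL pi_gt_zero by linarith
        then have "Re (g w) \<le> 0" "Im (g w) \<ge> 0" "- Re (g w) \<ge> 2 * Im (g w)"
          unfolding gre gim using Rp reL c1 by (simp_all add: divide_right_mono field_simps)
        then show ?thesis by (simp add: F_inf_def)
      qed
      have "norm (g w) \<le> (norm ?L + 2 * pi * real j) / (2 * R)"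
      proof -
        have "norm (\<i> * ?L - complex_of_real (2 * pi * real j)) \<le> norm (\<i> * ?L) + norm (complex_of_real (2 * pi * real j))"
          by (rule norm_triangle_ineq4)
        also have "\<dots> = norm ?L + 2 * pi * real j" by (simp add: norm_mult)
        finally show ?thesis using Rp by (simp add: g_def norm_divide divide_right_mono)
      qed
      also have "\<dots> \<le> (2 * pi * real j + 2 * pi * real j) / (2 * R)"
      proof -
        have "8 * pi * real j / 600 \<le> 2 * pi * real j" by simp
        then have "norm ?L \<le> 2 * pi * real j" using Ln Lb by linarith
        then show ?thesis using Rp by (intro divide_right_mono) auto
      qed
      also have "\<dots> = \<rho>" using Rp by (simp add: \<rho>_def field_simps)
      finally have "norm (g w) \<le> \<rho>" .
      then show "y \<in> S" using inF w(2) by (simp add: S_def)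
    qed
    have "\<exists>!x\<in>S. g x = x"
      by (rule Banach_fix[OF Scomp _ c gS]) (use S0 lip in \<open>auto simp: S_def dist_norm\<close>)
    then obtain w where w: "w \<in> S" "g w = w" by auto
    have wF: "w \<in> F_inf" using w(1) by (simp add: S_def)
    show ?thesis
    proof (rule ex1I[of _ w])
      show "w \<in> F_inf \<and> w = G_fun \<gamma> j R w" using wF w(2) Geq[OF wF] by simp
    next
      fix v assume v: "v \<in> F_inf \<and> v = G_fun \<gamma> j R v"
      then have gv: "g v = v" using Geq[of v] by simp
      have "norm (v - w) \<le> c * norm (v - w)" using lip[of v w] v wF gv w(2) by simp
      then have "(1 - c) * norm (v - w) \<le> 0" by (simp add: algebra_simps)
      then have "norm (v - w) \<le> 0" using c by (simp add: mult_le_0_iff)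
      then show "v = w" by simp
    qed
  qed
  show ?thesis
  proof (intro conjI allI impI)
    fix j :: nat assume "j \<ge> 1"
    then show "\<exists>!w. w \<in> F_inf \<and> w = G_fun \<gamma> j R w" by (rule part1)
  next
    fix j :: nat and w assume "w \<in> F_inf \<and> w = G_fun \<gamma> j R w"
    then show "w \<in> F_j \<gamma> j" using part2 by blast
  next
    fix j k :: nat and w v
    assume "j \<noteq> k" "w = G_fun \<gamma> j R w" "v = G_fun \<gamma> k R v"
    then show "w \<noteq> v" by (rule part3)
  qed
qed

end
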